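(* Let $f,g:[0,\infty)\to[0,\infty)$, let $0<a<b<\infty$, and suppose $fg$ is Lebesgue integrable on $[a,b]$. Let $q>1$ and suppose $f^q$ and $g^{q/(q-1)}$ are both $(1,1)$-GA-convex on $[0,b]$. Then \[ \int_a^b f(x)g(x)\,dx\le\Bigl\{f^q(a)[L(a,b)-a]+[b-L(a,b)]f^q(b)\Bigr\}^{1/q}\Bigl\{g^{q/(q-1)}(a)[L(a,b)-a]+[b-L(a,b)]g^{q/(q-1)}(b)\Bigr\}^{1-1/q}. \]
   Context: For $c>0$, $h:[0,c]\to\mathbb{R}$ and $(\alpha,m)\in(0,1]^2$, $h$ is called $(\alpha,m)$-GA-convex on $[0,c]$ if $h\bigl(x^\lambda y^{m(1-\lambda)}\bigr)\le\lambda^\alpha h(x)+m(1-\lambda^\alpha)h(y)$ for all $x,y\in[0,c]$ and all $\lambda\in[0,1]$ (with the convention $0^0=1$). For $x,y>0$, $x\neq y$, the logarithmic mean is $L(x,y)=\frac{y-x}{\ln y-\ln x}$. *)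

theory Defs
  imports "HOL-Analysis.Analysis"
begin

text \<open>Real power with the convention 0^0 = 1 (Isabelle's powr has 0 powr 0 = 0).
  Only used for nonnegative bases.\<close>
definition gpow :: "real \<Rightarrow> real \<Rightarrow> real" where
  "gpow x t = (if t = 0 then 1 else x powr t)"

definition GA_convex :: "real \<Rightarrow> real \<Rightarrow> real \<Rightarrow> (real \<Rightarrow> real) \<Rightarrow> bool" where
  "GA_convex \<alpha> m c h \<longleftrightarrow>
     (\<forall>x\<in>{0..c}. \<forall>y\<in>{0..c}. \<forall>t\<in>{0..1}.
        h (gpow x t * gpow y (m * (1 - t))) \<le> gpow t \<alpha> * h x + m * (1 - gpow t \<alpha>) * h y)"

definition logmean :: "real \<Rightarrow> real \<Rightarrow> real" where
  "logmean x y = (y - x) / (ln y - ln x)"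

end

theory Submission
  imports Defs
begin

lemma ga_bound:
  assumes h: "GA_convex 1 1 b h" and ab: "0 < a" "a < b" and x: "x \<in> {a..b}"
  shows "h x \<le> ((ln b - ln x)/(ln b - ln a)) * h a + (1 - (ln b - ln x)/(ln b - ln a)) * h b"
proof -
  define t where "t = (ln b - ln x)/(ln b - ln a)"
  have l: "ln a < ln b" using ab by simp
  have xp: "x > 0" using x ab by auto
  have "ln x \<le> ln b" "ln a \<le> ln x" using x xp ab by auto
  hence t01: "t \<in> {0..1}" using l unfolding t_def by (auto simp: field_simps)
  have e: "a powr t * b powr (1 - t) = x"
  proof -
    have "a powr t * b powr (1 - t) = exp (t * ln a + (1 - t) * ln b)"
      using ab by (simp add: powr_def exp_add)
    also have "t * ln a + (1 - t) * ln b = ln x"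
    proof -
      have th: "t * (ln b - ln a) = ln b - ln x" using l by (simp add: t_def)
      hence "t * ln b - t * ln a = ln b - ln x" by (simp add: right_diff_distrib)
      thus ?thesis by (simp add: left_diff_distrib)
    qed
    finally show ?thesis using xp by simp
  qed
  have g1: "gpow a t = a powr t" "gpow b (1 * (1 - t)) = b powr (1 - t)" "gpow t 1 = t"
    using ab t01 by (auto simp: gpow_def)
  have "h (gpow a t * gpow b (1 * (1 - t))) \<le> gpow t 1 * h a + 1 * (1 - gpow t 1) * h b"
    using h ab t01 unfolding GA_convex_def by auto
  thus ?thesis using g1 e unfolding t_def by simp
qed

lemma ln_strict:
  fixes x :: real assumes "0 < x" "x \<noteq> 1" shows "ln x < x - 1"
proof -
  have s: "sqrt x > 0" "sqrt x \<noteq> 1" using assms by auto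
  have "ln x = 2 * ln (sqrt x)" using assms by (simp add: ln_sqrt)
  also have "\<dots> \<le> 2 * (sqrt x - 1)" using ln_le_minus_one[OF s(1)] by simp
  also have "\<dots> < x - 1"
  proof -
    have "0 < (sqrt x - 1)^2" using s by simp
    thus ?thesis using assms by (simp add: power2_eq_square algebra_simps)
  qed
  finally show ?thesis .
qed

lemma logmean_bounds:
  assumes ab: "0 < a" "a < b"
  shows "a < logmean a b" "logmean a b < b"
proof -
  have l: "ln b - ln a > 0" using ab by simp
  have "ln (b/a) < b/a - 1" using ab by (intro ln_strict) auto
  hence "a * (ln b - ln a) < b - a" using ab by (simp add: ln_div field_simps)
  thus "a < logmean a b" unfolding logmean_def using l by (simp add: field_simps)
  have "ln (a/b) < a/b - 1" using ab by (intro ln_strict) auto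
  hence "b - a < b * (ln b - ln a)" using ab by (simp add: ln_div field_simps)
  thus "logmean a b < b" unfolding logmean_def using l by (simp add: field_simps)
qed

lemma P_integral:
  assumes ab: "0 < a" "a < b"
  shows "((\<lambda>x. ((ln b - ln x)/(ln b - ln a)) * A + (1 - (ln b - ln x)/(ln b - ln a)) * B)
     has_integral (A * (logmean a b - a) + (b - logmean a b) * B)) {a..b}"
proof -
  define l where "l = ln b - ln a"
  have l: "l > 0" using ab by (simp add: l_def)
  define T where "T x = (x * ln b - x * ln x + x) / l" for x
  define F where "F x = A * T x + B * (x - T x)" for x
  have "(F has_vector_derivative ((ln b - ln x)/(ln b - ln a)) * A + (1 - (ln b - ln x)/(ln b - ln a)) * B) (at x within {a..b})"
    if "x \<in> {a..b}" for x
  proof -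
    have xp: "x > 0" using that ab by auto
    have "(F has_real_derivative A * ((ln b - ln x - 1 + 1) / l) + B * (1 - (ln b - ln x - 1 + 1) / l)) (at x)"
      unfolding F_def T_def using xp l
      by (auto intro!: derivative_eq_intros simp: field_simps)
    thus ?thesis
      by (simp add: has_real_derivative_iff_has_vector_derivative has_vector_derivative_at_within l_def algebra_simps)
  qed
  from fundamental_theorem_of_calculus[OF _ this] ab
  have "((\<lambda>x. ((ln b - ln x)/(ln b - ln a)) * A + (1 - (ln b - ln x)/(ln b - ln a)) * B) has_integral F b - F a) {a..b}"
    by simp
  moreover have "F b - F a = A * (logmean a b - a) + (b - logmean a b) * B"
  proof -
    have lb: "ln b = ln a + l" by (simp add: l_def)
    have "T b - T a = ((b*ln b - b*ln b + b) - (a*ln b - a*ln a + a))/l"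
      by (simp add: T_def diff_divide_distrib)
    also have "\<dots> = (b - a)/l - a" unfolding lb using l by (simp add: field_simps)
    also have "\<dots> = logmean a b - a" by (simp add: logmean_def l_def)
    finally have tt: "T b - T a = logmean a b - a" .
    have "F b - F a = A*(T b - T a) + B*((b-a) - (T b - T a))"
      unfolding F_def by (simp add: algebra_simps)
    also have "\<dots> = A * (logmean a b - a) + (b - logmean a b) * B"
      unfolding tt by (simp add: algebra_simps)
    finally show ?thesis .
  qed
  ultimately show ?thesis by simp
qed


theorem corollary3p8:
  fixes f g :: "real \<Rightarrow> real" and a b q :: real
  assumes f_nonneg: "\<forall>x\<ge>0. f x \<ge> 0"
    and g_nonneg: "\<forall>x\<ge>0. g x \<ge> 0"
    and ab: "0 < a" "a < b"
    and integrable: "set_integrable lborel {a..b} (\<lambda>x. f x * g x)"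
    and q: "q > 1"
    and f_conv: "GA_convex 1 1 b (\<lambda>x. f x powr q)"
    and g_conv: "GA_convex 1 1 b (\<lambda>x. g x powr (q / (q - 1)))"
  shows "(LINT x:{a..b}|lborel. f x * g x) \<le>
     ((f a powr q) * (logmean a b - a) + (b - logmean a b) * (f b powr q)) powr (1 / q) *
     ((g a powr (q / (q - 1))) * (logmean a b - a) + (b - logmean a b) * (g b powr (q / (q - 1))))
        powr (1 - 1 / q)"
proof -
  define p where "p = q / (q - 1)"
  have p1: "p > 1" using q by (simp add: p_def field_simps)
  have pq: "1/q + 1/p = 1" using q by (simp add: p_def field_simps)
  have pq': "1 - 1/q = 1/p" using pq by simp
  define t where "t x = (ln b - ln x)/(ln b - ln a)" for x
  define A where "A = (f a powr q) * (logmean a b - a) + (b - logmean a b) * (f b powr q)"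
  define B where "B = (g a powr p) * (logmean a b - a) + (b - logmean a b) * (g b powr p)"
  define P where "P x = t x * f a powr q + (1 - t x) * f b powr q" for x
  define Q where "Q x = t x * g a powr p + (1 - t x) * g b powr p" for x
  have L: "a < logmean a b" "logmean a b < b" using logmean_bounds[OF ab] by auto
  have fnn: "f x \<ge> 0" "g x \<ge> 0" if "x \<in> {a..b}" for x using that ab f_nonneg g_nonneg by auto
  have PI: "(P has_integral A) {a..b}" unfolding P_def A_def t_def using P_integral[OF ab] .
  have QI: "(Q has_integral B) {a..b}" unfolding Q_def B_def t_def using P_integral[OF ab] .
  have FP: "f x powr q \<le> P x" if "x \<in> {a..b}" for x
    using ga_bound[OF f_conv ab that] unfolding P_def t_def by simp
  have GQ: "g x powr p \<le> Q x" if "x \<in> {a..b}" for x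
    using ga_bound[OF g_conv ab that] unfolding Q_def t_def p_def by simp
  have fgint: "(\<lambda>x. f x * g x) integrable_on {a..b}"
    and eq: "(LINT x:{a..b}|lborel. f x * g x) = integral {a..b} (\<lambda>x. f x * g x)"
    using set_borel_integral_eq_integral[OF integrable] by auto
  have A0: "A \<ge> 0" unfolding A_def using L by (intro add_nonneg_nonneg mult_nonneg_nonneg) auto
  have B0: "B \<ge> 0" unfolding B_def using L by (intro add_nonneg_nonneg mult_nonneg_nonneg) auto
  show ?thesis
  proof (cases "A = 0 \<or> B = 0")
    case True
    have z: "f x * g x = 0" if "x \<in> {a..b}" for x
    proof (cases "A = 0")
      case True
      have n1: "0 \<le> f a powr q * (logmean a b - a)" "0 \<le> (b - logmean a b) * f b powr q"
        using L by auto
      hence "f a powr q * (logmean a b - a) = 0" "(b - logmean a b) * f b powr q = 0"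
        using True unfolding A_def by linarith+
      hence "f a powr q = 0" "f b powr q = 0" using L by auto
      hence "f x powr q \<le> 0" using FP[OF that] by (simp add: P_def)
      hence "f x powr q = 0" by (metis antisym powr_ge_zero)
      hence "f x = 0" by simp
      thus ?thesis by simp
    next
      case False
      hence BB: "B = 0" using \<open>A = 0 \<or> B = 0\<close> by simp
      have n1: "0 \<le> g a powr p * (logmean a b - a)" "0 \<le> (b - logmean a b) * g b powr p"
        using L by auto
      hence "g a powr p * (logmean a b - a) = 0" "(b - logmean a b) * g b powr p = 0"
        using BB unfolding B_def by linarith+
      hence "g a powr p = 0" "g b powr p = 0" using L by auto
      hence "g x powr p \<le> 0" using GQ[OF that] by (simp add: Q_def)
      hence "g x powr p = 0" by (metis antisym powr_ge_zero)
      hence "g x = 0" by simp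
      thus ?thesis by simp
    qed
    have "integral {a..b} (\<lambda>x. f x * g x) = integral {a..b} (\<lambda>x. 0::real)"
      using z by (intro integral_cong) auto
    hence "(LINT x:{a..b}|lborel. f x * g x) = 0" using eq by simp
    moreover have "A powr (1/q) * B powr (1 - 1/q) = 0" using True by auto
    ultimately show ?thesis unfolding A_def B_def p_def by simp
  next
    case False
    hence Ap: "A > 0" and Bp: "B > 0" using A0 B0 by auto
    define u where "u = A powr (1/q)"
    define v where "v = B powr (1/p)"
    have up: "u > 0" "v > 0" using Ap Bp by (auto simp: u_def v_def)
    have uq: "u powr q = A" using Ap q by (simp add: u_def powr_powr)
    have vp: "v powr p = B" using Bp p1 by (simp add: v_def powr_powr)
    define R where "R x = u * v * (P x / (q * A) + Q x / (p * B))" for x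
    have RI: "(R has_integral u * v * (A / (q * A) + B / (p * B))) {a..b}"
      unfolding R_def
      by (intro has_integral_mult_right has_integral_add has_integral_divide PI QI)
    have Rval: "u * v * (A / (q * A) + B / (p * B)) = u * v"
      using Ap Bp pq by simp
    have pw: "f x * g x \<le> R x" if "x \<in> {a..b}" for x
    proof -
      have "f x * g x = u * v * ((f x / u) * (g x / v))" using up by simp
      also have "\<dots> \<le> u * v * ((f x / u) powr q / q + (g x / v) powr p / p)"
        using up fnn[OF that] q p1 pq
        by (intro mult_left_mono Youngs_inequality) auto
      also have "(f x / u) powr q = f x powr q / A"
        using up fnn[OF that] uq by (simp add: powr_divide)
      also have "(g x / v) powr p = g x powr p / B"
        using up fnn[OF that] vp by (simp add: powr_divide)
      also have "u * v * (f x powr q / A / q + g x powr p / B / p) \<le> R x"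
      proof -
        have "f x powr q / A / q \<le> P x / (q * A)"
          using FP[OF that] Ap q by (simp add: divide_right_mono mult.commute flip: divide_divide_eq_left)
        moreover have "g x powr p / B / p \<le> Q x / (p * B)"
          using GQ[OF that] Bp p1 by (simp add: divide_right_mono mult.commute flip: divide_divide_eq_left)
        ultimately show ?thesis unfolding R_def using up
          by (intro mult_left_mono add_mono) auto
      qed
      finally show ?thesis .
    qed
    have "integral {a..b} (\<lambda>x. f x * g x) \<le> integral {a..b} R"
      using fgint RI pw by (intro integral_le) auto
    also have "\<dots> = u * v" using RI Rval by (simp add: integral_unique)
    finally show ?thesis using eq unfolding u_def v_def A_def B_def pq' p_def by simp
  qed
qed

end
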